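(* Let $1<p<2$, $q=1/p$, and let $k\ge1$ be an integer. Then the maximum of $P_k(y) = \sum_{i=1}^k y_i^q \prod_{j\ne i}(1-y_j)^q$ over $y\in\Delta_k$ is attained either at a standard basis vector (where $P_k=1$) or at the vector $(1/k,\dots,1/k)$ (where $P_k=\theta(k)$). In particular $w(k,p)=\max\{1,\theta(k)\}$.
   Context: $\Delta_k=\{y\in\mathbb R^k: y_i\ge 0,\ \sum_i y_i=1\}$; $w(k,p)=\max_{y\in\Delta_k}P_k(y)$. For integer $k\ge2$, $\theta(k) = k\left(\frac{(k-1)^{k-1}}{k^k}\right)^q$, and $\theta(1)=1$. *)

theory Defs
  imports "HOL-Analysis.Analysis"
begin

text \<open>Points of R^k are represented as functions nat => real; only the coordinates
  0..k-1 are relevant. Coordinates are indexed from 0 instead of 1.\<close>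

definition std_simplex :: "nat \<Rightarrow> (nat \<Rightarrow> real) set" where
  "std_simplex k = {y. (\<forall>i<k. 0 \<le> y i) \<and> (\<Sum>i<k. y i) = 1}"

definition Pk :: "nat \<Rightarrow> real \<Rightarrow> (nat \<Rightarrow> real) \<Rightarrow> real" where
  "Pk k p y = (let q = 1 / p in
     (\<Sum>i<k. y i powr q * (\<Prod>j\<in>{..<k} - {i}. (1 - y j) powr q)))"

definition w :: "nat \<Rightarrow> real \<Rightarrow> real" where
  "w k p = (SUP y\<in>std_simplex k. Pk k p y)"

definition theta :: "nat \<Rightarrow> real \<Rightarrow> real" where
  "theta k p = (if k = 1 then 1 else
     real k * ((real (k - 1) ^ (k - 1) / real k ^ k) powr (1 / p)))"

definition basis_vec :: "nat \<Rightarrow> nat \<Rightarrow> real" where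
  "basis_vec i = (\<lambda>j. if j = i then 1 else 0)"

definition uniform_vec :: "nat \<Rightarrow> nat \<Rightarrow> real" where
  "uniform_vec k = (\<lambda>j. if j < k then 1 / real k else 0)"

end

theory Submission
  imports Defs
begin


lemma chi_deriv:
  fixes M r d :: real
  assumes "-M < d" "d < M"
  shows "((\<lambda>d. (M-d) powr (1-r) - (M+d) powr (1-r)) has_real_derivative
           (r-1)*((M-d) powr (-r) + (M+d) powr (-r))) (at d)"
proof -
  have p1: "M - d > 0" "M + d > 0" using assms by auto
  have d1: "((\<lambda>d. M - d) has_real_derivative -1) (at d)"
    by (auto intro!: derivative_eq_intros)
  have d2: "((\<lambda>d. M + d) has_real_derivative 1) (at d)"
    by (auto intro!: derivative_eq_intros)
  have "((\<lambda>d. (M-d) powr (1-r) - (M+d) powr (1-r)) has_real_derivative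
     (1-r) * (M-d) powr (1-r - of_nat 1) * (-1) - (1-r) * (M+d) powr (1-r - of_nat 1) * 1) (at d)"
    by (intro DERIV_diff DERIV_fun_powr d1 d2 p1)
  then show ?thesis by (simp add: algebra_simps)
qed



definition chi :: "real \<Rightarrow> real \<Rightarrow> real \<Rightarrow> real" where
  "chi M r d = (M-d) powr (1-r) - (M+d) powr (1-r)"
definition chi1 :: "real \<Rightarrow> real \<Rightarrow> real \<Rightarrow> real" where
  "chi1 M r d = (r-1)*((M-d) powr (-r) + (M+d) powr (-r))"
definition chi2 :: "real \<Rightarrow> real \<Rightarrow> real \<Rightarrow> real" where
  "chi2 M r d = (r-1)*r*((M-d) powr (-r-1) - (M+d) powr (-r-1))"

lemma deriv_cont_on:
  fixes f :: "real \<Rightarrow> real"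
  assumes "\<And>x. x \<in> {a..b} \<Longrightarrow> (f has_real_derivative f' x) (at x)"
  shows "continuous_on {a..b} f"
  using assms by (meson DERIV_isCont continuous_at_imp_continuous_on)

lemma chi_has_deriv:
  assumes "-M < d" "d < M"
  shows "(chi M r has_real_derivative chi1 M r d) (at d)"
  using chi_deriv[OF assms, of r] unfolding chi_def[abs_def] chi1_def by simp

lemma chi1_has_deriv:
  fixes M r d :: real
  assumes "-M < d" "d < M"
  shows "(chi1 M r has_real_derivative chi2 M r d) (at d)"
proof -
  have p1: "M - d > 0" "M + d > 0" using assms by auto
  have d1: "((\<lambda>d. M - d) has_real_derivative -1) (at d)"
    by (auto intro!: derivative_eq_intros)
  have d2: "((\<lambda>d. M + d) has_real_derivative 1) (at d)"
    by (auto intro!: derivative_eq_intros)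
  have "((\<lambda>d. (r-1)*((M-d) powr (-r) + (M+d) powr (-r))) has_real_derivative
     (r-1)*((-r) * (M-d) powr (-r - of_nat 1) * (-1) + (-r) * (M+d) powr (-r - of_nat 1) * 1)) (at d)"
    by (intro DERIV_cmult DERIV_add DERIV_fun_powr d1 d2 p1)
  then show ?thesis unfolding chi1_def[abs_def] chi2_def by (simp add: algebra_simps)
qed

lemma chi2_pos:
  assumes "r > 1" "0 < d" "d < M"
  shows "chi2 M r d > 0"
proof -
  have "(M+d) powr (-r-1) < (M-d) powr (-r-1)"
    by (rule powr_less_mono2_neg) (use assms in auto)
  then show ?thesis unfolding chi2_def using assms by (simp add: mult_pos_pos)
qed

lemma omega_pos:
  assumes "r > 1" "0 < d" "d < M"
  shows "d * chi1 M r d - chi M r d > 0"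
proof -
  let ?w = "\<lambda>x. x * chi1 M r x - chi M r x"
  have der: "(?w has_real_derivative x * chi2 M r x) (at x)" if "-M < x" "x < M" for x
  proof -
    have "(?w has_real_derivative (x * chi2 M r x + 1 * chi1 M r x) - chi1 M r x) (at x)"
      by (intro DERIV_diff DERIV_mult' chi_has_deriv chi1_has_deriv that DERIV_ident)
    then show ?thesis by simp
  qed
  have "?w 0 < ?w d"
  proof (rule DERIV_pos_imp_increasing_open[of 0 d ?w])
    show "0 < d" by fact
    show "\<exists>y. (?w has_real_derivative y) (at x) \<and> 0 < y" if "0 < x" "x < d" for x
      using der[of x] that assms chi2_pos[of r x M] by (intro exI[of _ "x * chi2 M r x"]) auto
    show "continuous_on {0..d} ?w"
      by (rule deriv_cont_on[where f' = "\<lambda>x. x * chi2 M r x"], rule der) (use assms in auto)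
  qed
  then show ?thesis by (simp add: chi_def)
qed

lemma ratio_incr:
  assumes "r > 1" "0 < d1" "d1 < d2" "d2 < M"
  shows "chi M r d1 / d1 < chi M r d2 / d2"
proof (rule DERIV_pos_imp_increasing[OF assms(3)])
  fix x assume x: "d1 \<le> x" "x \<le> d2"
  have "((\<lambda>x. chi M r x / x) has_real_derivative (chi1 M r x * x - chi M r x * 1) / (x * x)) (at x)"
    by (intro DERIV_divide chi_has_deriv DERIV_ident) (use x assms in auto)
  moreover have "(chi1 M r x * x - chi M r x * 1) / (x * x) > 0"
    using omega_pos[of r x M] x assms by (simp add: algebra_simps)
  ultimately show "\<exists>y. ((\<lambda>x. chi M r x / x) has_real_derivative y) (at x) \<and> 0 < y" by blast
qed

definition gpair :: "real \<Rightarrow> real \<Rightarrow> real \<Rightarrow> real \<Rightarrow> real \<Rightarrow> real" where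
  "gpair A B M r d = (M-d) powr r * (M+d) powr r * A + ((M+d) powr r + (M-d) powr r) * B"

lemma gpair_deriv:
  assumes "-M < d" "d < M"
  shows "(gpair A B M r has_real_derivative
      r * (M-d) powr (r-1) * (M+d) powr (r-1) * (B * chi M r d - 2 * d * A)) (at d)"
proof -
  have p1: "M - d > 0" "M + d > 0" using assms by auto
  have d1: "((\<lambda>d. M - d) has_real_derivative -1) (at d)"
    by (auto intro!: derivative_eq_intros)
  have d2: "((\<lambda>d. M + d) has_real_derivative 1) (at d)"
    by (auto intro!: derivative_eq_intros)
  have "(gpair A B M r has_real_derivative
     ((M-d) powr r * (r * (M+d) powr (r - of_nat 1) * 1) + (r * (M-d) powr (r - of_nat 1) * (-1)) * (M+d) powr r) * A
     + ((r * (M+d) powr (r - of_nat 1) * 1) + (r * (M-d) powr (r - of_nat 1) * (-1))) * B) (at d)"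
    unfolding gpair_def[abs_def]
    by (intro DERIV_add DERIV_mult' DERIV_cmult_right DERIV_fun_powr d1 d2 p1 DERIV_const) 
  moreover
  have e1: "(M-d) powr r = (M-d) powr (r-1) * (M-d)" "(M+d) powr r = (M+d) powr (r-1) * (M+d)"
    using p1 by (simp_all add: powr_diff)
  have e2: "(M-d) powr (r-1) * (M-d) powr (1-r) = 1" "(M+d) powr (r-1) * (M+d) powr (1-r) = 1"
    using p1 by (simp_all flip: powr_add)
  have "((M-d) powr r * (r * (M+d) powr (r - of_nat 1) * 1) + (r * (M-d) powr (r - of_nat 1) * (-1)) * (M+d) powr r) * A
     + ((r * (M+d) powr (r - of_nat 1) * 1) + (r * (M-d) powr (r - of_nat 1) * (-1))) * B
     = r * (M-d) powr (r-1) * (M+d) powr (r-1) * (B * chi M r d - 2 * d * A)"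
    unfolding chi_def e1
    by (simp add: algebra_simps e2[simplified mult.commute] )
  ultimately show ?thesis by simp
qed



lemma pair_lemma:
  assumes r: "r > 1" and A: "A \<ge> 0" and B: "B > 0" and d0: "0 < d0" "d0 < M"
  shows "(B * chi M r d0 \<le> 2 * d0 * A \<longrightarrow> gpair A B M r d0 < gpair A B M r 0) \<and>
         (B * chi M r d0 > 2 * d0 * A \<longrightarrow>
           (\<forall>d. d0 < d \<and> d < M \<longrightarrow> gpair A B M r d0 < gpair A B M r d))"
proof -
  define g where "g = gpair A B M r"
  define \<kappa> where "\<kappa> x = B * (chi M r x / x) - 2 * A" for x
  define pf where "pf x = r * (M-x) powr (r-1) * (M+x) powr (r-1)" for x
  have pf_pos: "pf x > 0" if "-M < x" "x < M" for x
    unfolding pf_def using that r by simp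
  have der: "(g has_real_derivative pf x * (x * \<kappa> x)) (at x)" if "0 < x" "x < M" for x
  proof -
    have "B * chi M r x - 2 * x * A = x * \<kappa> x" unfolding \<kappa>_def using that by (simp add: field_simps)
    then show ?thesis using gpair_deriv[of M x A B r] that unfolding g_def pf_def by simp
  qed
  have derall: "(g has_real_derivative pf x * (B * chi M r x - 2 * x * A)) (at x)" if "-M < x" "x < M" for x
    using gpair_deriv[of M x A B r] that unfolding g_def pf_def by simp
  have cont: "continuous_on {a..b} g" if "-M < a" "b < M" for a b
    by (rule deriv_cont_on[where f' = "\<lambda>x. pf x * (B * chi M r x - 2 * x * A)"], rule derall)
       (use that in auto)
  have kmono: "\<kappa> x < \<kappa> y" if "0 < x" "x < y" "y < M" for x y
    using mult_strict_left_mono[OF ratio_incr[OF r that] B] unfolding \<kappa>_def by simp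
  have keq: "\<kappa> d0 \<le> 0 \<longleftrightarrow> B * chi M r d0 \<le> 2 * d0 * A"
    unfolding \<kappa>_def using d0 by (simp add: field_simps)
  show ?thesis
  proof (cases "\<kappa> d0 \<le> 0")
    case True
    have "g d0 < g 0"
    proof (rule DERIV_neg_imp_decreasing_open[of 0 d0 g])
      show "0 < d0" by fact
      show "\<exists>y. (g has_real_derivative y) (at x) \<and> y < 0" if "0 < x" "x < d0" for x
      proof (intro exI conjI)
        show "(g has_real_derivative pf x * (x * \<kappa> x)) (at x)" using der that d0 by auto
        have "\<kappa> x < 0" using kmono[of x d0] that d0 True by auto
        then show "pf x * (x * \<kappa> x) < 0" using pf_pos[of x] that d0
          by (simp add: mult_pos_neg)
      qed
      show "continuous_on {0..d0} g" by (rule cont) (use d0 in auto)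
    qed
    then show ?thesis unfolding g_def using True keq by simp
  next
    case False
    have "g d0 < g d" if "d0 < d" "d < M" for d
    proof (rule DERIV_pos_imp_increasing_open[of d0 d g])
      show "d0 < d" by fact
      show "\<exists>y. (g has_real_derivative y) (at x) \<and> 0 < y" if "d0 < x" "x < d" for x
      proof (intro exI conjI)
        show "(g has_real_derivative pf x * (x * \<kappa> x)) (at x)" using der that d0 \<open>d < M\<close> by auto
        have "\<kappa> x > 0" using kmono[of d0 x] that d0 False \<open>d < M\<close> by auto
        then show "pf x * (x * \<kappa> x) > 0" using pf_pos[of x] that d0 \<open>d < M\<close>
          by simp
      qed
      show "continuous_on {d0..d} g" by (rule cont) (use d0 that in auto)
    qed
    then show ?thesis unfolding g_def using False keq by auto
  qed
qed



definition Fk :: "nat \<Rightarrow> real \<Rightarrow> (nat \<Rightarrow> real) \<Rightarrow> real" where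
  "Fk k r y = (\<Sum>i<k. \<Prod>j\<in>{..<k} - {i}. (1 - y j) powr r)"

definition Bof :: "nat \<Rightarrow> real \<Rightarrow> (nat \<Rightarrow> real) \<Rightarrow> nat \<Rightarrow> nat \<Rightarrow> real" where
  "Bof k r y i j = (\<Prod>l\<in>{..<k} - {i,j}. (1 - y l) powr r)"

definition Aof :: "nat \<Rightarrow> real \<Rightarrow> (nat \<Rightarrow> real) \<Rightarrow> nat \<Rightarrow> nat \<Rightarrow> real" where
  "Aof k r y i j = (\<Sum>l\<in>{..<k} - {i,j}. \<Prod>m\<in>{..<k} - {i,j} - {l}. (1 - y m) powr r)"

lemma Fk_decomp:
  assumes "i < k" "j < k" "i \<noteq> j"
  shows "Fk k r y = (1 - y i) powr r * (1 - y j) powr r * Aof k r y i j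
          + ((1 - y i) powr r + (1 - y j) powr r) * Bof k r y i j"
proof -
  define R where "R = {..<k} - {i,j}"
  define f where "f l = (1 - y l) powr r" for l
  have fin: "finite R" unfolding R_def by simp
  have K: "{..<k} = insert i (insert j R)" unfolding R_def using assms by auto
  have iR: "i \<notin> R" "j \<notin> R" unfolding R_def by auto
  have e1: "{..<k} - {i} = insert j R" unfolding R_def using assms by auto
  have e2: "{..<k} - {j} = insert i R" unfolding R_def using assms by auto
  have e3: "{..<k} - {l} = insert i (insert j (R - {l}))" if "l \<in> R" for l
    using that assms unfolding R_def by auto
  have "Fk k r y = (\<Sum>l\<in>insert i (insert j R). \<Prod>m\<in>{..<k} - {l}. f m)"
    unfolding Fk_def f_def K[symmetric] by simp
  also have "\<dots> = (\<Prod>m\<in>{..<k} - {i}. f m) + (\<Prod>m\<in>{..<k} - {j}. f m)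
      + (\<Sum>l\<in>R. \<Prod>m\<in>{..<k} - {l}. f m)"
    using fin iR assms by (simp add: sum.insert)
  also have "(\<Prod>m\<in>{..<k} - {i}. f m) = f j * (\<Prod>m\<in>R. f m)"
    unfolding e1 using fin iR by simp
  also have "(\<Prod>m\<in>{..<k} - {j}. f m) = f i * (\<Prod>m\<in>R. f m)"
    unfolding e2 using fin iR by simp
  also have "(\<Sum>l\<in>R. \<Prod>m\<in>{..<k} - {l}. f m) = (\<Sum>l\<in>R. f i * f j * (\<Prod>m\<in>R - {l}. f m))"
  proof (rule sum.cong[OF refl])
    fix l assume l: "l \<in> R"
    show "(\<Prod>m\<in>{..<k} - {l}. f m) = f i * f j * (\<Prod>m\<in>R - {l}. f m)"
      unfolding e3[OF l] using fin iR assms by simp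
  qed
  also have "\<dots> = f i * f j * (\<Sum>l\<in>R. \<Prod>m\<in>R - {l}. f m)"
    by (simp add: sum_distrib_left)
  finally show ?thesis
    unfolding Aof_def Bof_def R_def[symmetric] f_def by (simp add: algebra_simps)
qed

lemma Aof_Bof_upd:
  assumes "i \<noteq> j"
  shows "Aof k r (y(i := u, j := v)) i j = Aof k r y i j"
        "Bof k r (y(i := u, j := v)) i j = Bof k r y i j"
  unfolding Aof_def Bof_def
  by (intro sum.cong prod.cong refl; auto)+

lemma Aof_nonneg: "Aof k r y i j \<ge> 0"
  unfolding Aof_def by (intro sum_nonneg prod_nonneg) auto

lemma sum_upd2:
  fixes y :: "nat \<Rightarrow> real"
  assumes "i < k" "j < k" "i \<noteq> j" "u + v = y i + y j"
  shows "(\<Sum>l<k. (y(i := u, j := v)) l) = (\<Sum>l<k. y l)"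
proof -
  define R where "R = {..<k} - {i,j}"
  have K: "{..<k} = insert i (insert j R)" using assms unfolding R_def by auto
  have iR: "i \<notin> R" "j \<notin> R" "finite R" unfolding R_def by auto
  have h1: "(\<Sum>l<k. (y(i := u, j := v)) l) = u + v + (\<Sum>l\<in>R. (y(i := u, j := v)) l)"
    unfolding K using iR assms by (simp add: sum.insert)
  have h2: "(\<Sum>l\<in>R. (y(i := u, j := v)) l) = (\<Sum>l\<in>R. y l)"
    using iR by (intro sum.cong) auto
  have h3: "(\<Sum>l<k. y l) = y i + y j + (\<Sum>l\<in>R. y l)"
    unfolding K using iR assms by (simp add: sum.insert)
  show ?thesis using h1 h2 h3 assms by simp
qed



definition Sk :: "nat \<Rightarrow> (nat \<Rightarrow> real) set" where
  "Sk k = {y. (\<forall>i<k. 0 \<le> y i \<and> y i \<le> 1) \<and> (\<forall>i. k \<le> i \<longrightarrow> y i = 0) \<and> (\<Sum>i<k. y i) = 1}"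

lemma Sk_compact: "compact (Sk k)"
proof -
  define X where "X i = (if i < k then {0..1::real} else {0})" for i
  have "compactin (product_topology (\<lambda>i. euclidean) UNIV) (PiE UNIV X)"
    by (subst compactin_PiE) (auto simp: X_def)
  then have c1: "compact (PiE UNIV X)"
    by (simp add: euclidean_product_topology)
  have c2: "closed {y::nat\<Rightarrow>real. (\<Sum>i<k. y i) = 1}"
    by (intro closed_Collect_eq continuous_intros continuous_on_sum continuous_on_product_coordinates)
  have m: "y \<in> PiE UNIV X \<longleftrightarrow> (\<forall>i<k. 0 \<le> y i \<and> y i \<le> 1) \<and> (\<forall>i. k \<le> i \<longrightarrow> y i = 0)" for y
  proof -
    have "y \<in> PiE UNIV X \<longleftrightarrow> (\<forall>i. y i \<in> X i)" by (simp add: PiE_UNIV_domain Pi_iff)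
    also have "\<dots> \<longleftrightarrow> (\<forall>i<k. 0 \<le> y i \<and> y i \<le> 1) \<and> (\<forall>i. k \<le> i \<longrightarrow> y i = 0)"
      unfolding X_def by (metis atLeastAtMost_iff not_le singleton_iff)
    finally show ?thesis .
  qed
  have "Sk k = PiE UNIV X \<inter> {y. (\<Sum>i<k. y i) = 1}"
    unfolding Sk_def using m by blast
  then show ?thesis using c1 c2 by auto
qed

lemma Fk_cont:
  assumes "r > 0"
  shows "continuous_on (Sk k) (Fk k r)"
proof -
  have cj: "continuous_on (Sk k) (\<lambda>y. y j)" for j
    by (rule continuous_on_subset[OF continuous_on_product_coordinates]) simp
  have "continuous_on (Sk k) (\<lambda>y. (\<Sum>i<k. \<Prod>j\<in>{..<k} - {i}. (1 - y j) powr r))"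
  proof (intro continuous_on_sum continuous_on_prod continuous_on_powr')
    fix i j
    show "continuous_on (Sk k) (\<lambda>y. 1 - y j)" by (intro continuous_intros cj)
    show "continuous_on (Sk k) (\<lambda>y. r)" by (intro continuous_intros)
    assume "j \<in> {..<k} - {i}"
    then show "\<forall>y\<in>Sk k. 0 \<le> 1 - y j \<and> (1 - y j = 0 \<longrightarrow> 0 < r)"
      using assms unfolding Sk_def by auto
  qed
  then show ?thesis unfolding Fk_def[abs_def] by simp
qed

lemma Sk_nonempty: "k \<ge> 1 \<Longrightarrow> (\<lambda>i. if i = 0 then 1 else 0) \<in> Sk k"
  unfolding Sk_def by (auto simp: sum.delta)



lemma pair_move:
  fixes z :: "nat \<Rightarrow> real"
  assumes z: "z \<in> Sk k" and ij: "i < k" "j < k" "i \<noteq> j"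
    and M: "M = (2 - z i - z j) / 2" and d: "0 \<le> d" "d \<le> M" "M + d \<le> 1"
  shows "z(i := 1-(M+d), j := 1-(M-d)) \<in> Sk k \<and>
         Fk k r (z(i := 1-(M+d), j := 1-(M-d))) = gpair (Aof k r z i j) (Bof k r z i j) M r d"
proof
  let ?z = "z(i := 1-(M+d), j := 1-(M-d))"
  have zs: "\<forall>l<k. 0 \<le> z l \<and> z l \<le> 1" "\<forall>l. k \<le> l \<longrightarrow> z l = 0" "(\<Sum>l<k. z l) = 1"
    using z unfolding Sk_def by auto
  have "0 \<le> z i" "z i \<le> 1" "0 \<le> z j" "z j \<le> 1" using zs(1) ij by auto
  then have M01: "0 \<le> M" "M \<le> 1" using M by auto
  have "(\<Sum>l<k. ?z l) = (\<Sum>l<k. z l)"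
    by (rule sum_upd2) (use ij M in auto)
  moreover have "\<forall>l<k. 0 \<le> ?z l \<and> ?z l \<le> 1" using zs(1) M01 d by auto
  moreover have "\<forall>l. k \<le> l \<longrightarrow> ?z l = 0" using zs(2) ij by auto
  ultimately show "?z \<in> Sk k" using zs(3) unfolding Sk_def by auto
  have "Fk k r ?z = (1 - ?z i) powr r * (1 - ?z j) powr r * Aof k r ?z i j
          + ((1 - ?z i) powr r + (1 - ?z j) powr r) * Bof k r ?z i j"
    by (rule Fk_decomp) (use ij in auto)
  also have "\<dots> = (M+d) powr r * (M-d) powr r * Aof k r z i j
          + ((M+d) powr r + (M-d) powr r) * Bof k r z i j"
    using ij by (simp add: Aof_Bof_upd)
  finally show "Fk k r ?z = gpair (Aof k r z i j) (Bof k r z i j) M r d"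
    unfolding gpair_def by (simp add: algebra_simps)
qed

lemma Fk_vertex:
  fixes z :: "nat \<Rightarrow> real"
  assumes z: "z \<in> Sk k" and i0: "i0 < k" "z i0 = 1" and r: "r > 0"
  shows "Fk k r z = 1"
proof -
  have zs: "\<forall>l<k. 0 \<le> z l \<and> z l \<le> 1" "(\<Sum>l<k. z l) = 1"
    using z unfolding Sk_def by auto
  have "(\<Sum>l<k. z l) = z i0 + (\<Sum>l\<in>{..<k} - {i0}. z l)"
    using i0 by (simp add: sum.remove)
  then have "(\<Sum>l\<in>{..<k} - {i0}. z l) = 0" using zs i0 by simp
  then have z0: "z l = 0" if "l \<in> {..<k} - {i0}" for l
    using sum_nonneg_eq_0_iff[of "{..<k} - {i0}" z] zs(1) that by auto
  have "Fk k r z = (\<Prod>j\<in>{..<k} - {i0}. (1 - z j) powr r)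
      + (\<Sum>l\<in>{..<k} - {i0}. \<Prod>j\<in>{..<k} - {l}. (1 - z j) powr r)"
    unfolding Fk_def using i0 by (simp add: sum.remove)
  also have "(\<Prod>j\<in>{..<k} - {i0}. (1 - z j) powr r) = 1"
    by (rule prod.neutral) (simp add: z0)
  also have "(\<Sum>l\<in>{..<k} - {i0}. \<Prod>j\<in>{..<k} - {l}. (1 - z j) powr r) = 0"
  proof (rule sum.neutral, rule ballI)
    fix l assume l: "l \<in> {..<k} - {i0}"
    show "(\<Prod>j\<in>{..<k} - {l}. (1 - z j) powr r) = 0"
      by (rule prod_zero) (use l i0 in auto)
  qed
  finally show ?thesis by simp
qed

lemma Fk_const:
  assumes "\<forall>l<k. z l = v"
  shows "Fk k r z = real k * ((1 - v) powr r) ^ (k - 1)"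
proof -
  have "Fk k r z = (\<Sum>i<k. \<Prod>j\<in>{..<k} - {i}. (1 - v) powr r)"
    unfolding Fk_def using assms by (intro sum.cong prod.cong) auto
  also have "\<dots> = (\<Sum>i<k. ((1 - v) powr r) ^ (k - 1))"
    by (intro sum.cong refl) (simp add: card_Diff_singleton)
  finally show ?thesis by simp
qed



lemma Fk_le:
  assumes r: "r > 1" and k: "k \<ge> 1" and y: "y \<in> Sk k"
  shows "Fk k r y \<le> max 1 (real k * ((1 - 1 / real k) powr r) ^ (k - 1))"
proof -
  obtain z where z: "z \<in> Sk k" and zmax: "\<And>y. y \<in> Sk k \<Longrightarrow> Fk k r y \<le> Fk k r z"
    using continuous_attains_sup[OF Sk_compact _ Fk_cont, of k r] Sk_nonempty[OF k] r by force
  have zs: "\<forall>l<k. 0 \<le> z l \<and> z l \<le> 1" "(\<Sum>l<k. z l) = 1"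
    using z unfolding Sk_def by auto
  have "Fk k r z \<le> max 1 (real k * ((1 - 1 / real k) powr r) ^ (k - 1))"
  proof (cases "\<exists>i<k. z i = 1")
    case True
    then obtain i0 where "i0 < k" "z i0 = 1" by auto
    then show ?thesis using Fk_vertex[OF z _ _, of i0 r] r by simp
  next
    case False
    then have lt1: "z l < 1" if "l < k" for l using zs(1) that by force
    have Bpos: "Bof k r z i j > 0" for i j
    proof (unfold Bof_def, rule prod_pos)
      fix l assume "l \<in> {..<k} - {i, j}"
      then have "z l < 1" using lt1 by auto
      then show "0 < (1 - z l) powr r" by simp
    qed
    define Mf where "Mf i j = (2 - z i - z j) / 2" for i j
    have zself: "Fk k r z = gpair (Aof k r z i j) (Bof k r z i j) (Mf i j) r ((z j - z i) / 2)"
      if "i < k" "j < k" "i \<noteq> j" "z i \<le> z j" for i j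
    proof -
      have "z(i := 1 - (Mf i j + (z j - z i) / 2), j := 1 - (Mf i j - (z j - z i) / 2)) = z"
        unfolding Mf_def by (rule ext) (auto simp: field_simps)
      moreover have "0 \<le> (z j - z i) / 2" "(z j - z i) / 2 \<le> Mf i j" "Mf i j + (z j - z i) / 2 \<le> 1"
        using that zs(1)[rule_format, OF that(1)] zs(1)[rule_format, OF that(2)] unfolding Mf_def by (auto simp: field_simps)
      ultimately show ?thesis
        using pair_move[OF z that(1-3) Mf_def, of "(z j - z i) / 2" r] by simp
    qed
    have zeq: "gpair (Aof k r z i j) (Bof k r z i j) (Mf i j) r 0 \<le> Fk k r z"
      if "i < k" "j < k" "i \<noteq> j" for i j
    proof -
      have "0 \<le> Mf i j" "Mf i j \<le> 1"
        using that zs(1)[rule_format, OF that(1)] zs(1)[rule_format, OF that(2)] unfolding Mf_def by (auto simp: field_simps)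
      then have "z(i := 1 - Mf i j, j := 1 - Mf i j) \<in> Sk k \<and>
         Fk k r (z(i := 1 - Mf i j, j := 1 - Mf i j)) = gpair (Aof k r z i j) (Bof k r z i j) (Mf i j) r 0"
        using pair_move[OF z that(1-3) Mf_def, of 0 r] by simp
      then show ?thesis using zmax by metis
    qed
    have noless: "\<not> (0 < z i \<and> z i < z j)" if ij: "i < k" "j < k" for i j
    proof
      assume a: "0 < z i \<and> z i < z j"
      then have ne: "i \<noteq> j" by auto
      define M where "M = Mf i j"
      define d0 where "d0 = (z j - z i) / 2"
      define A where "A = Aof k r z i j"
      define B where "B = Bof k r z i j"
      have d0M: "0 < d0" "d0 < M" using a lt1[OF ij(2)] unfolding M_def d0_def Mf_def by auto
      have Fz: "Fk k r z = gpair A B M r d0"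
        using zself[OF ij ne] a unfolding A_def B_def M_def d0_def by simp
      have PL: "(B * chi M r d0 \<le> 2 * d0 * A \<longrightarrow> gpair A B M r d0 < gpair A B M r 0) \<and>
         (B * chi M r d0 > 2 * d0 * A \<longrightarrow>
           (\<forall>d. d0 < d \<and> d < M \<longrightarrow> gpair A B M r d0 < gpair A B M r d))"
        by (rule pair_lemma[OF r _ _ d0M]) (auto simp: A_def B_def Aof_nonneg Bpos)
      show False
      proof (cases "B * chi M r d0 \<le> 2 * d0 * A")
        case True
        then have "Fk k r z < gpair A B M r 0" using PL Fz by auto
        then show False using zeq[OF ij ne] unfolding A_def B_def M_def by simp
      next
        case False
        define d where "d = d0 + min (z i) (1 - z j) / 2"
        have dd: "d0 < d" "d < M" "M + d \<le> 1" "0 \<le> d"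
          using a lt1[OF ij(2)] d0M unfolding d_def M_def d0_def Mf_def by (auto simp: min_def field_simps)
        then have "Fk k r z < gpair A B M r d" using PL Fz False by auto
        moreover have "gpair A B M r d \<le> Fk k r z"
        proof -
          have "d \<le> Mf i j" using dd unfolding M_def by simp
          then have "z(i := 1 - (Mf i j + d), j := 1 - (Mf i j - d)) \<in> Sk k \<and>
            Fk k r (z(i := 1 - (Mf i j + d), j := 1 - (Mf i j - d))) = gpair A B M r d"
            using pair_move[OF z ij ne Mf_def, of d r] dd unfolding A_def B_def M_def by blast
          then show ?thesis using zmax by metis
        qed
        ultimately show False by simp
      qed
    qed
    have alleq: "z i = z j" if "i < k" "j < k" "0 < z i" "0 < z j" for i j
      using noless[of i j] noless[of j i] that by force
    have allpos: "0 < z j" if "j < k" for j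
    proof (rule ccontr)
      assume "\<not> 0 < z j"
      then have zj0: "z j = 0" using zs(1) that by force
      obtain i where i: "i < k" "0 < z i"
      proof -
        have "\<exists>i<k. 0 < z i"
        proof (rule ccontr)
          assume "\<not> (\<exists>i<k. 0 < z i)"
          then have "(\<Sum>l<k. z l) \<le> 0" by (intro sum_nonpos) auto
          then show False using zs(2) by simp
        qed
        then show ?thesis using that by blast
      qed
      define v where "v = z i"
      define P where "P = {l\<in>{..<k}. 0 < z l}"
      have finP: "finite P" unfolding P_def by simp
      have zP: "z l = v" if "l \<in> P" for l using alleq[of l i] that i unfolding P_def v_def by auto
      have "(\<Sum>l<k. z l) = (\<Sum>l\<in>P. z l)"
        by (rule sum.mono_neutral_right) (use zs(1) in \<open>auto simp: P_def\<close>)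
      also have "\<dots> = real (card P) * v" using zP by simp
      finally have cP: "real (card P) * v = 1" using zs(2) by simp
      have ne: "j \<noteq> i" using zj0 i by auto
      have v01: "0 < v" "v < 1" using i lt1 unfolding v_def by auto
      define M where "M = Mf j i"
      define d0 where "d0 = (z i - z j) / 2"
      define A where "A = Aof k r z j i"
      define B where "B = Bof k r z j i"
      define \<alpha> where "\<alpha> = 1 - v"
      have al: "0 < \<alpha>" "\<alpha> < 1" using v01 unfolding \<alpha>_def by auto
      have Md: "M - d0 = \<alpha>" "M + d0 = 1" "2 * d0 = v" "0 < d0" "d0 < M"
        using zj0 v01 unfolding M_def d0_def \<alpha>_def Mf_def v_def by (auto simp: field_simps)
      have Fz: "Fk k r z = gpair A B M r d0"
        using zself[OF that i(1) ne] zj0 i unfolding A_def B_def M_def d0_def by simp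
      define R where "R = {..<k} - {j, i}"
      define f where "f l = (1 - z l) powr r" for l
      have finR: "finite R" unfolding R_def by simp
      have PR: "P - {i} \<subseteq> R" unfolding P_def R_def using zj0 by auto
      have Bl: "(\<Prod>m\<in>R - {l}. f m) = B / \<alpha> powr r" if "l \<in> P - {i}" for l
      proof -
        have "B = f l * (\<Prod>m\<in>R - {l}. f m)"
          unfolding B_def Bof_def R_def[symmetric] f_def[symmetric]
          using PR that finR prod.remove[OF finR, of l f] by auto
        moreover have "f l = \<alpha> powr r" unfolding f_def \<alpha>_def using zP that by simp
        ultimately show ?thesis using al by simp
      qed
      have "(\<Sum>l\<in>P - {i}. \<Prod>m\<in>R - {l}. f m) \<le> A"
        unfolding A_def Aof_def R_def[symmetric] f_def[symmetric]
        by (rule sum_mono2[OF finR PR]) (auto simp: f_def intro: prod_nonneg)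
      moreover have "(\<Sum>l\<in>P - {i}. \<Prod>m\<in>R - {l}. f m) = real (card P - 1) * (B / \<alpha> powr r)"
        using Bl i finP by (simp add: P_def)
      moreover have "real (card P - 1) = real (card P) - 1"
      proof -
        have "i \<in> P" using i unfolding P_def by auto
        then have "card P \<ge> 1" using finP card_0_eq[OF finP] by (metis One_nat_def Suc_leI empty_iff neq0_conv)
        then show ?thesis by simp
      qed
      ultimately have Ag: "(real (card P) - 1) * (B / \<alpha> powr r) \<le> A" by simp
      have "v * ((real (card P) - 1) * (B / \<alpha> powr r)) = \<alpha> * (B / \<alpha> powr r)"
        using cP unfolding \<alpha>_def by (simp add: algebra_simps)
      also have "\<alpha> * (B / \<alpha> powr r) = B * \<alpha> powr (1 - r)"
        using al by (simp add: powr_diff)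
      finally have "B * \<alpha> powr (1 - r) \<le> v * A"
        using mult_left_mono[OF Ag, of v] v01 by simp
      moreover have "chi M r d0 = \<alpha> powr (1 - r) - 1"
        unfolding chi_def using Md by simp
      ultimately have key0: "B * chi M r d0 \<le> v * A"
      proof -
        assume h1: "B * \<alpha> powr (1 - r) \<le> v * A" and h2: "chi M r d0 = \<alpha> powr (1 - r) - 1"
        have "B * chi M r d0 = B * \<alpha> powr (1 - r) - B" unfolding h2 by (simp add: algebra_simps)
        then show ?thesis using h1 Bpos[of j i] unfolding B_def by linarith
      qed
      have key: "B * chi M r d0 \<le> 2 * d0 * A" using key0 Md(3) by simp
      have "gpair A B M r d0 < gpair A B M r 0"
        using pair_lemma[OF r _ _ Md(4) Md(5), of A B] key
        by (auto simp: A_def B_def Aof_nonneg Bpos)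
      then have "Fk k r z < gpair A B M r 0" using Fz by simp
      then show False using zeq[OF that i(1) ne] unfolding A_def B_def M_def by simp
    qed
    have k0: "0 < k" using k by simp
    have zc: "\<forall>l<k. z l = z 0"
    proof (intro allI impI)
      fix l assume l: "l < k"
      show "z l = z 0" by (rule alleq[OF l k0 allpos[OF l] allpos[OF k0]])
    qed
    define c where "c = z 0"
    have zc': "\<forall>l<k. z l = c" using zc unfolding c_def by blast
    have "(\<Sum>l<k. z l) = real k * c" using zc' by simp
    then have "c = 1 / real k" using zs(2) k0 by (simp add: field_simps)
    then have "Fk k r z = real k * ((1 - 1 / real k) powr r) ^ (k - 1)"
      using Fk_const[OF zc', of r] by simp
    then show ?thesis by simp
  qed
  then show ?thesis using zmax[OF y] by linarith
qed



lemma young0: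
  fixes a b q :: real
  assumes "0 \<le> a" "0 \<le> b" "0 < q" "q < 1"
  shows "a powr q * b powr (1 - q) \<le> q * a + (1 - q) * b"
proof (cases "a = 0 \<or> b = 0")
  case True
  then show ?thesis using assms by auto
next
  case False
  then show ?thesis using Youngs_inequality_0[of q "1 - q" a b] assms by auto
qed

lemma holder_step:
  fixes y :: "nat \<Rightarrow> real" and q r :: real
  assumes y: "y \<in> std_simplex k" and q: "0 < q" "q < 1" and rq: "r * (1 - q) = q"
  shows "(\<Sum>i<k. y i powr q * (\<Prod>j\<in>{..<k} - {i}. (1 - y j) powr q)) \<le> (Fk k r y) powr (1 - q)"
proof -
  have ys: "\<forall>i<k. 0 \<le> y i" "(\<Sum>i<k. y i) = 1" using y unfolding std_simplex_def by auto
  have yle: "y i \<le> 1" if "i < k" for i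
  proof -
    have "y i \<le> (\<Sum>i<k. y i)" by (rule member_le_sum) (use ys that in auto)
    then show ?thesis using ys by simp
  qed
  define D where "D i = (\<Prod>j\<in>{..<k} - {i}. (1 - y j) powr r)" for i
  have Dnn: "0 \<le> D i" for i unfolding D_def by (intro prod_nonneg) auto
  have CD: "(\<Prod>j\<in>{..<k} - {i}. (1 - y j) powr q) = D i powr (1 - q)" for i
    unfolding D_def prod_powr_distrib powr_powr rq by simp
  define T where "T = Fk k r y"
  have T: "T = (\<Sum>i<k. D i)" unfolding T_def Fk_def D_def by simp
  have Tnn: "0 \<le> T" unfolding T using Dnn by (simp add: sum_nonneg)
  show ?thesis
  proof (cases "T = 0")
    case True
    then have "D i = 0" if "i < k" for i using sum_nonneg_eq_0_iff[of "{..<k}" D] Dnn that T by auto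
    then have "(\<Sum>i<k. y i powr q * (\<Prod>j\<in>{..<k} - {i}. (1 - y j) powr q)) = 0"
      unfolding CD using q by simp
    then show ?thesis by simp
  next
    case False
    then have Tpos: "T > 0" using Tnn by simp
    have trm: "y i powr q * D i powr (1 - q) \<le> (q * y i + (1 - q) * (D i / T)) * T powr (1 - q)"
      if "i < k" for i
    proof -
      have "y i powr q * D i powr (1 - q) = (y i powr q * (D i / T) powr (1 - q)) * T powr (1 - q)"
        using Tpos by (simp add: powr_divide)
      also have "\<dots> \<le> (q * y i + (1 - q) * (D i / T)) * T powr (1 - q)"
        by (intro mult_right_mono young0) (use ys that q Dnn Tpos in auto)
      finally show ?thesis .
    qed
    have "(\<Sum>i<k. y i powr q * (\<Prod>j\<in>{..<k} - {i}. (1 - y j) powr q))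
        = (\<Sum>i<k. y i powr q * D i powr (1 - q))" unfolding CD by simp
    also have "\<dots> \<le> (\<Sum>i<k. (q * y i + (1 - q) * (D i / T)) * T powr (1 - q))"
      by (rule sum_mono) (rule trm, simp)
    also have "\<dots> = (q * (\<Sum>i<k. y i) + (1 - q) * ((\<Sum>i<k. D i) / T)) * T powr (1 - q)"
    proof -
      have "(\<Sum>i<k. (q * y i + (1 - q) * (D i / T)) * T powr (1 - q))
          = (\<Sum>i<k. q * y i + (1 - q) * (D i / T)) * T powr (1 - q)"
        by (rule sum_distrib_right[symmetric])
      also have "(\<Sum>i<k. q * y i + (1 - q) * (D i / T)) = (\<Sum>i<k. q * y i) + (\<Sum>i<k. (1 - q) * (D i / T))"
        by (rule sum.distrib)
      also have "(\<Sum>i<k. q * y i) = q * (\<Sum>i<k. y i)" by (rule sum_distrib_left[symmetric])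
      also have "(\<Sum>i<k. (1 - q) * (D i / T)) = (1 - q) * ((\<Sum>i<k. D i) / T)"
        by (simp add: sum_distrib_left[symmetric] sum_divide_distrib[symmetric])
      finally show ?thesis .
    qed
    also have "\<dots> = T powr (1 - q)" using ys Tpos unfolding T[symmetric] by simp
    finally show ?thesis unfolding T_def .
  qed
qed



lemma theta_nf:
  assumes "k \<ge> 2" "p > 0"
  shows "theta k p = real k powr (1 - 1/p) * (1 - 1 / real k) powr ((1/p) * real (k - 1))"
proof -
  define x where "x = 1 - 1 / real k"
  have kpos: "real k > 0" using assms by simp
  have x: "x > 0" unfolding x_def using assms by (simp add: field_simps)
  have xk: "real (k - 1) / real k = x" unfolding x_def using assms by (simp add: field_simps of_nat_diff)
  have "real (k - 1) ^ (k - 1) / real k ^ k = (real (k - 1) / real k) ^ (k - 1) * (1 / real k)"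
    using assms by (cases k) (auto simp: power_divide)
  also have "\<dots> = x powr real (k - 1) * (1 / real k)" unfolding xk using x by (simp add: powr_realpow)
  finally have "(real (k - 1) ^ (k - 1) / real k ^ k) powr (1/p) = x powr ((1/p) * real (k - 1)) * real k powr (- (1/p))"
    using x kpos by (simp add: powr_mult powr_powr powr_divide powr_minus_divide mult.commute)
  then have "theta k p = real k * (x powr ((1/p) * real (k - 1)) * real k powr (- (1/p)))"
    unfolding theta_def using assms by simp
  also have "\<dots> = real k powr (1 - 1/p) * x powr ((1/p) * real (k - 1))"
    using kpos by (simp add: powr_diff powr_minus_divide field_simps)
  finally show ?thesis unfolding x_def .
qed

lemma T_nf:
  assumes "k \<ge> 2" "0 < q" "r * (1 - q) = q"
  shows "(real k * ((1 - 1 / real k) powr r) ^ (k - 1)) powr (1 - q)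
       = real k powr (1 - q) * (1 - 1 / real k) powr (q * real (k - 1))"
proof -
  define x where "x = 1 - 1 / real k"
  have x: "x > 0" unfolding x_def using assms by (simp add: field_simps)
  have "(x powr r) ^ (k - 1) = x powr (r * real (k - 1))"
    using x by (simp add: powr_realpow[symmetric] powr_powr)
  then have "(real k * (x powr r) ^ (k - 1)) powr (1 - q) = real k powr (1 - q) * x powr (r * real (k - 1) * (1 - q))"
    by (simp add: powr_mult powr_powr)
  also have "r * real (k - 1) * (1 - q) = q * real (k - 1)"
  proof -
    have "r * real (k - 1) * (1 - q) = (r * (1 - q)) * real (k - 1)" by (simp add: algebra_simps)
    then show ?thesis using assms(3) by simp
  qed
  finally show ?thesis unfolding x_def .
qed

lemma Pk_basis:
  assumes "i < k" "p > 0"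
  shows "Pk k p (basis_vec i) = 1"
proof -
  let ?b = "basis_vec i"
  have "Pk k p ?b = (\<Sum>l<k. ?b l powr (1/p) * (\<Prod>j\<in>{..<k} - {l}. (1 - ?b j) powr (1/p)))"
    unfolding Pk_def Let_def by simp
  also have "\<dots> = ?b i powr (1/p) * (\<Prod>j\<in>{..<k} - {i}. (1 - ?b j) powr (1/p))
      + (\<Sum>l\<in>{..<k} - {i}. ?b l powr (1/p) * (\<Prod>j\<in>{..<k} - {l}. (1 - ?b j) powr (1/p)))"
    using assms by (simp add: sum.remove)
  also have "(\<Prod>j\<in>{..<k} - {i}. (1 - ?b j) powr (1/p)) = 1"
    by (rule prod.neutral) (simp add: basis_vec_def)
  also have "(\<Sum>l\<in>{..<k} - {i}. ?b l powr (1/p) * (\<Prod>j\<in>{..<k} - {l}. (1 - ?b j) powr (1/p))) = 0"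
    by (rule sum.neutral) (simp add: basis_vec_def)
  finally show ?thesis by (simp add: basis_vec_def)
qed

lemma Pk_uniform:
  assumes "k \<ge> 1" "p > 0"
  shows "Pk k p (uniform_vec k) = theta k p"
proof (cases "k = 1")
  case True
  then show ?thesis unfolding Pk_def theta_def uniform_vec_def by simp
next
  case False
  then have k2: "k \<ge> 2" using assms by simp
  define q where "q = 1 / p"
  define x where "x = 1 - 1 / real k"
  have x: "x > 0" unfolding x_def using k2 by (simp add: field_simps)
  have "Pk k p (uniform_vec k) = (\<Sum>i<k. (1 / real k) powr q * (\<Prod>j\<in>{..<k} - {i}. x powr q))"
    unfolding Pk_def uniform_vec_def q_def x_def Let_def by (intro sum.cong refl arg_cong2[where f="(*)"] prod.cong) auto
  also have "\<dots> = real k * ((1 / real k) powr q * (x powr q) ^ (k - 1))"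
    by (simp add: card_Diff_singleton)
  also have "(x powr q) ^ (k - 1) = x powr (q * real (k - 1))"
    using x by (simp add: powr_realpow[symmetric] powr_powr)
  also have "real k * ((1 / real k) powr q * x powr (q * real (k - 1))) = real k powr (1 - q) * x powr (q * real (k - 1))"
    using k2 by (simp add: powr_divide powr_diff field_simps)
  finally show ?thesis using theta_nf[OF k2 assms(2)] unfolding q_def x_def by simp
qed

lemma basis_in: "i < k \<Longrightarrow> basis_vec i \<in> std_simplex k"
  unfolding std_simplex_def basis_vec_def by (auto simp: sum.delta)

lemma uniform_in: "k \<ge> 1 \<Longrightarrow> uniform_vec k \<in> std_simplex k"
  unfolding std_simplex_def uniform_vec_def by auto

lemma Pk_le:
  assumes p: "1 < p" "p < 2" and k: "k \<ge> 1" and y: "y \<in> std_simplex k"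
  shows "Pk k p y \<le> max 1 (theta k p)"
proof -
  define q where "q = 1 / p"
  define r where "r = q / (1 - q)"
  have q: "0 < q" "q < 1" "1/2 < q" unfolding q_def using p by (auto simp: field_simps)
  have rq: "r * (1 - q) = q" unfolding r_def using q by simp
  have r1: "r > 1" unfolding r_def using q by (simp add: field_simps)
  define T where "T = real k * ((1 - 1 / real k) powr r) ^ (k - 1)"
  have Tnn: "T \<ge> 0" unfolding T_def by simp
  define y' where "y' i = (if i < k then y i else 0)" for i
  have ys: "\<forall>i<k. 0 \<le> y i" "(\<Sum>i<k. y i) = 1" using y unfolding std_simplex_def by auto
  have yle: "y i \<le> 1" if "i < k" for i
  proof -
    have "y i \<le> (\<Sum>i<k. y i)" by (rule member_le_sum) (use ys that in auto)
    then show ?thesis using ys by simp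
  qed
  have y': "y' \<in> Sk k" unfolding Sk_def y'_def using ys yle by auto
  have Fy: "Fk k r y' = Fk k r y" unfolding Fk_def y'_def by (intro sum.cong prod.cong) auto
  have Fnn: "0 \<le> Fk k r y" unfolding Fk_def by (intro sum_nonneg prod_nonneg) auto
  have "Pk k p y \<le> (Fk k r y) powr (1 - q)"
    using holder_step[OF y q(1,2) rq] unfolding Pk_def Let_def q_def by simp
  also have "\<dots> \<le> (max 1 T) powr (1 - q)"
    by (rule powr_mono2) (use q Fnn Fk_le[OF r1 k y'] Fy in \<open>auto simp: T_def\<close>)
  also have "\<dots> = max 1 (T powr (1 - q))"
  proof (cases "T \<le> 1")
    case True
    then have "T powr (1 - q) \<le> 1 powr (1 - q)" using Tnn q by (intro powr_mono2) auto
    then have "T powr (1 - q) \<le> 1" by simp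
    then show ?thesis using True by simp
  next
    case False
    then have "T powr (1 - q) \<ge> 1" using q by (simp add: ge_one_powr_ge_zero)
    then show ?thesis using False by simp
  qed
  also have "T powr (1 - q) = theta k p"
  proof (cases "k = 1")
    case True
    then show ?thesis unfolding T_def theta_def by simp
  next
    case False
    then have k2: "k \<ge> 2" using k by simp
    have "theta k p = real k powr (1 - 1/p) * (1 - 1 / real k) powr ((1/p) * real (k - 1))"
      by (rule theta_nf[OF k2]) (use p in simp)
    moreover have "T powr (1 - q) = real k powr (1 - q) * (1 - 1 / real k) powr (q * real (k - 1))"
      unfolding T_def by (rule T_nf[OF k2 q(1) rq])
    ultimately show ?thesis unfolding q_def by simp
  qed
  finally show ?thesis .
qed

theorem theorem3p1:
  fixes p :: real and k :: nat
  assumes "1 < p" and "p < 2" and "k \<ge> 1"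
  shows "(\<forall>i<k. Pk k p (basis_vec i) = 1)
       \<and> Pk k p (uniform_vec k) = theta k p
       \<and> (\<exists>y\<in>{basis_vec i | i. i < k} \<union> {uniform_vec k}.
            y \<in> std_simplex k \<and> (\<forall>z\<in>std_simplex k. Pk k p z \<le> Pk k p y))
       \<and> w k p = max 1 (theta k p)"
proof -
  have p0: "p > 0" using assms by simp
  have B: "\<forall>i<k. Pk k p (basis_vec i) = 1" using Pk_basis p0 by auto
  have U: "Pk k p (uniform_vec k) = theta k p" using Pk_uniform[OF assms(3) p0] .
  have le: "\<And>z. z \<in> std_simplex k \<Longrightarrow> Pk k p z \<le> max 1 (theta k p)"
    using Pk_le[OF assms] by blast
  have k0: "0 < k" using assms by simp
  obtain y where y: "y \<in> {basis_vec i | i. i < k} \<union> {uniform_vec k}" "y \<in> std_simplex k"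
    "Pk k p y = max 1 (theta k p)"
  proof (cases "theta k p \<le> 1")
    case True
    show ?thesis
      by (rule that[of "basis_vec 0"]) (use True B basis_in k0 in auto)
  next
    case False
    show ?thesis
      by (rule that[of "uniform_vec k"]) (use False U uniform_in assms(3) in auto)
  qed
  have E: "\<exists>y\<in>{basis_vec i | i. i < k} \<union> {uniform_vec k}.
            y \<in> std_simplex k \<and> (\<forall>z\<in>std_simplex k. Pk k p z \<le> Pk k p y)"
    using y le by auto
  have mem: "max 1 (theta k p) \<in> Pk k p ` std_simplex k"
    using y(2,3) by (metis image_eqI)
  have W: "w k p = max 1 (theta k p)"
    unfolding w_def
    by (rule cSup_eq_maximum[OF mem]) (use le in auto)
  show ?thesis using B U E W by blast
qed

end
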